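(* Let $\Phi:\mathbb{R}^2\to\mathbb{R}^2$ be a jacobian map of the form $\Phi(x,y)=(x+p(x,y),\,y+q(x,y))$, with $p,q$ real polynomials, $o(p)>1$, $o(q)>1$. Suppose one of the following holds: (i) $p$ is $x$-even and $q$ is $x$-odd; (ii) $p$ is $y$-odd and $q$ is $y$-even. Then $\Phi$ is a shear map.
   Context: A jacobian map is a real polynomial map $\Phi:\mathbb{R}^2\to\mathbb{R}^2$ whose jacobian determinant $\det J_\Phi$ is a non-zero constant. For a polynomial $P$, $o(P)$ is its order (lowest degree of a monomial appearing in $P$). A polynomial is $x$-even if it contains only monomials with even powers of $x$ (including $x^0$), $x$-odd if it contains only monomials with odd powers of $x$; $y$-even and $y$-odd are defined analogously. A polynomial map is a shear map if its nonlinear terms are linear combinations of powers of a single homogeneous polynomial of degree 1, i.e. there is a linear form $\ell(x,y)$ such that each component of the map, after removing its terms of degree $\le 1$, is a real linear combination of $\ell^i$, $i\ge 2$. *)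

theory Defs
  imports Complex_Main
begin

text \<open>A real polynomial in two variables x, y is represented by its coefficient
  function c :: nat \<times> nat \<Rightarrow> real, where c (i,j) is the coefficient of x^i y^j;
  only finitely many coefficients are non-zero.\<close>

type_synonym bpoly = "nat \<times> nat \<Rightarrow> real"

definition is_bpoly :: "bpoly \<Rightarrow> bool" where
  "is_bpoly c \<longleftrightarrow> finite {m. c m \<noteq> 0}"

definition beval :: "bpoly \<Rightarrow> real \<Rightarrow> real \<Rightarrow> real" where
  "beval c x y = (\<Sum>m\<in>{m. c m \<noteq> 0}. c m * x ^ fst m * y ^ snd m)"

definition bdx :: "bpoly \<Rightarrow> bpoly" where
  "bdx c = (\<lambda>(i,j). real (i+1) * c (i+1, j))"

definition bdy :: "bpoly \<Rightarrow> bpoly" where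
  "bdy c = (\<lambda>(i,j). real (j+1) * c (i, j+1))"

definition jacobian_map :: "bpoly \<Rightarrow> bpoly \<Rightarrow> bool" where
  "jacobian_map F G \<longleftrightarrow> is_bpoly F \<and> is_bpoly G \<and>
     (\<exists>k. k \<noteq> 0 \<and> (\<forall>x y. beval (bdx F) x y * beval (bdy G) x y
                          - beval (bdy F) x y * beval (bdx G) x y = k))"

definition order_gt_1 :: "bpoly \<Rightarrow> bool" where
  "order_gt_1 c \<longleftrightarrow> (\<forall>i j. c (i,j) \<noteq> 0 \<longrightarrow> i + j \<ge> 2)"

definition x_even :: "bpoly \<Rightarrow> bool" where
  "x_even c \<longleftrightarrow> (\<forall>i j. c (i,j) \<noteq> 0 \<longrightarrow> even i)"
definition x_odd :: "bpoly \<Rightarrow> bool" where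
  "x_odd c \<longleftrightarrow> (\<forall>i j. c (i,j) \<noteq> 0 \<longrightarrow> odd i)"
definition y_even :: "bpoly \<Rightarrow> bool" where
  "y_even c \<longleftrightarrow> (\<forall>i j. c (i,j) \<noteq> 0 \<longrightarrow> even j)"
definition y_odd :: "bpoly \<Rightarrow> bool" where
  "y_odd c \<longleftrightarrow> (\<forall>i j. c (i,j) \<noteq> 0 \<longrightarrow> odd j)"

definition nonlin :: "bpoly \<Rightarrow> bpoly" where
  "nonlin c = (\<lambda>(i,j). if i + j \<ge> 2 then c (i,j) else 0)"

definition shear_map :: "bpoly \<Rightarrow> bpoly \<Rightarrow> bool" where
  "shear_map F G \<longleftrightarrow> (\<exists>a b. (a, b) \<noteq> (0::real, 0::real) \<and>
     (\<exists>N (\<alpha>::nat \<Rightarrow> real) (\<beta>::nat \<Rightarrow> real). \<forall>x y.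
        beval (nonlin F) x y = (\<Sum>i\<in>{2..N}. \<alpha> i * (a*x + b*y) ^ i) \<and>
        beval (nonlin G) x y = (\<Sum>i\<in>{2..N}. \<beta> i * (a*x + b*y) ^ i)))"

definition plus_x :: "bpoly \<Rightarrow> bpoly" where
  "plus_x p = (\<lambda>m. p m + (if m = (1,0) then 1 else 0))"
definition plus_y :: "bpoly \<Rightarrow> bpoly" where
  "plus_y q = (\<lambda>m. q m + (if m = (0,1) then 1 else 0))"

end

theory Submission
  imports Defs "HOL-Computational_Algebra.Polynomial"
begin


lemma beval_superset:
  assumes "finite T" "{m. c m \<noteq> 0} \<subseteq> T"
  shows "beval c x y = (\<Sum>m\<in>T. c m * x ^ fst m * y ^ snd m)"
  unfolding beval_def
  by (rule sum.mono_neutral_left) (use assms in auto)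

lemma beval_add:
  assumes "is_bpoly c" "is_bpoly d"
  shows "beval (\<lambda>m. c m + d m) x y = beval c x y + beval d x y"
proof -
  let ?T = "{m. c m \<noteq> 0} \<union> {m. d m \<noteq> 0}"
  have f: "finite ?T" using assms by (simp add: is_bpoly_def)
  have "beval (\<lambda>m. c m + d m) x y = (\<Sum>m\<in>?T. (c m + d m) * x ^ fst m * y ^ snd m)"
    by (rule beval_superset[OF f]) auto
  also have "\<dots> = (\<Sum>m\<in>?T. c m * x ^ fst m * y ^ snd m) + (\<Sum>m\<in>?T. d m * x ^ fst m * y ^ snd m)"
    by (simp add: distrib_right sum.distrib)
  also have "\<dots> = beval c x y + beval d x y"
    using beval_superset[OF f, of c] beval_superset[OF f, of d] by auto
  finally show ?thesis .
qed

lemma beval_00: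
  assumes "is_bpoly c"
  shows "beval c 0 0 = c (0,0)"
proof -
  let ?T = "{m. c m \<noteq> 0} \<union> {(0,0)}"
  have f: "finite ?T" using assms by (simp add: is_bpoly_def)
  have "beval c 0 0 = (\<Sum>m\<in>?T. c m * 0 ^ fst m * 0 ^ snd m)"
    by (rule beval_superset[OF f]) auto
  also have "\<dots> = (\<Sum>m\<in>?T. if m = (0,0) then c m else 0)"
    by (rule sum.cong) (auto simp: zero_power)
  also have "\<dots> = c (0,0)" using f by (simp add: sum.delta)
  finally show ?thesis .
qed

lemma beval_zero: "beval (\<lambda>m. 0) x y = 0" by (simp add: beval_def)

lemma beval_delta: "beval (\<lambda>m. if m = (0,0) then 1 else 0) x y = 1"
proof -
  have "{m. (if m = (0,0) then 1 else 0::real) \<noteq> 0} = {(0,0)}" by auto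
  thus ?thesis by (simp add: beval_def)
qed

lemma is_bpoly_bdx: "is_bpoly c \<Longrightarrow> is_bpoly (bdx c)"
proof -
  assume a: "is_bpoly c"
  have "{m. bdx c m \<noteq> 0} \<subseteq> (\<lambda>(i,j). (i - 1, j)) ` {m. c m \<noteq> 0}"
  proof
    fix m assume "m \<in> {m. bdx c m \<noteq> 0}"
    then obtain i j where m: "m = (i,j)" and "c (i+1,j) \<noteq> 0" by (cases m) (auto simp: bdx_def)
    thus "m \<in> (\<lambda>(i,j). (i - 1, j)) ` {m. c m \<noteq> 0}"
      by (auto intro!: image_eqI[where x="(i+1,j)"])
  qed
  thus ?thesis using a unfolding is_bpoly_def by (meson finite_imageI finite_subset)
qed

lemma is_bpoly_bdy: "is_bpoly c \<Longrightarrow> is_bpoly (bdy c)"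
proof -
  assume a: "is_bpoly c"
  have "{m. bdy c m \<noteq> 0} \<subseteq> (\<lambda>(i,j). (i, j - 1)) ` {m. c m \<noteq> 0}"
  proof
    fix m assume "m \<in> {m. bdy c m \<noteq> 0}"
    then obtain i j where m: "m = (i,j)" and "c (i,j+1) \<noteq> 0" by (cases m) (auto simp: bdy_def)
    thus "m \<in> (\<lambda>(i,j). (i, j - 1)) ` {m. c m \<noteq> 0}"
      by (auto intro!: image_eqI[where x="(i,j+1)"])
  qed
  thus ?thesis using a unfolding is_bpoly_def by (meson finite_imageI finite_subset)
qed

definition swp :: "bpoly \<Rightarrow> bpoly" where "swp c = (\<lambda>(i,j). c (j,i))"

lemma swp_supp: "{m. swp c m \<noteq> 0} = prod.swap ` {m. c m \<noteq> 0}"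
  by (auto simp: swp_def image_iff)

lemma is_bpoly_swp: "is_bpoly c \<Longrightarrow> is_bpoly (swp c)"
  by (simp add: is_bpoly_def swp_supp)

lemma beval_swp: "beval (swp c) x y = beval c y x"
  unfolding beval_def swp_supp
  by (subst sum.reindex) (auto simp: swp_def mult_ac)

lemma bdx_swp: "bdx (swp c) = swp (bdy c)"
  by (auto simp: bdx_def bdy_def swp_def fun_eq_iff)
lemma bdy_swp: "bdy (swp c) = swp (bdx c)"
  by (auto simp: bdx_def bdy_def swp_def fun_eq_iff)

lemma bdx_plus_x: "bdx (plus_x p) = (\<lambda>m. bdx p m + (if m = (0,0) then 1 else 0))"
  by (auto simp: bdx_def plus_x_def fun_eq_iff)
lemma bdy_plus_x: "bdy (plus_x p) = bdy p"
  by (auto simp: bdy_def plus_x_def fun_eq_iff)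
lemma bdx_plus_y: "bdx (plus_y p) = bdx p"
  by (auto simp: bdx_def plus_y_def fun_eq_iff)
lemma bdy_plus_y: "bdy (plus_y p) = (\<lambda>m. bdy p m + (if m = (0,0) then 1 else 0))"
  by (auto simp: bdy_def plus_y_def fun_eq_iff)

lemma is_bpoly_delta: "is_bpoly (\<lambda>m. if m = (0,0) then 1 else 0)"
proof -
  have "{m. (if m = (0,0) then 1 else 0::real) \<noteq> 0} = {(0,0)}" by auto
  thus ?thesis by (simp add: is_bpoly_def)
qed

lemma beval_bdx_plus_x: "is_bpoly p \<Longrightarrow> beval (bdx (plus_x p)) x y = beval (bdx p) x y + 1"
  by (simp add: bdx_plus_x beval_add is_bpoly_bdx is_bpoly_delta beval_delta)
lemma beval_bdy_plus_y: "is_bpoly p \<Longrightarrow> beval (bdy (plus_y p)) x y = beval (bdy p) x y + 1"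
  by (simp add: bdy_plus_y beval_add is_bpoly_bdy is_bpoly_delta beval_delta)

lemma beval_x_even: "x_even c \<Longrightarrow> beval c (-x) y = beval c x y"
  unfolding beval_def x_even_def by (rule sum.cong) auto
lemma beval_x_odd: "x_odd c \<Longrightarrow> beval c (-x) y = - beval c x y"
  unfolding beval_def x_odd_def by (subst sum_negf[symmetric], rule sum.cong) auto

lemma x_even_bdx: "x_even c \<Longrightarrow> x_odd (bdx c)" by (auto simp: x_even_def x_odd_def bdx_def)
lemma x_even_bdy: "x_even c \<Longrightarrow> x_even (bdy c)" by (auto simp: x_even_def x_odd_def bdy_def)
lemma x_odd_bdx: "x_odd c \<Longrightarrow> x_even (bdx c)" by (auto simp: x_even_def x_odd_def bdx_def)
lemma x_odd_bdy: "x_odd c \<Longrightarrow> x_odd (bdy c)" by (auto simp: x_even_def x_odd_def bdy_def)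

lemma sum_single:
  fixes g :: "nat \<Rightarrow> 'a::comm_monoid_add"
  assumes "a \<le> N" "\<And>i. i \<le> N \<Longrightarrow> i \<noteq> a \<Longrightarrow> g i = 0" "g a = v"
  shows "(\<Sum>i\<le>N. g i) = v"
proof -
  have "(\<Sum>i\<le>N. g i) = (\<Sum>i\<le>N. if i = a then g i else 0)"
    by (rule sum.cong) (use assms in auto)
  also have "\<dots> = v" using assms by (simp add: sum.delta)
  finally show ?thesis .
qed

lemma sum_zero:
  fixes g :: "nat \<Rightarrow> 'a::comm_monoid_add"
  assumes "\<And>i. i \<le> N \<Longrightarrow> g i = 0"
  shows "(\<Sum>i\<le>N. g i) = 0"
  using assms by simp

lemma dd_zero:
  fixes f :: "real poly"
  assumes "pderiv (pderiv f) = 0" "coeff f 1 = 0"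
  shows "pderiv f = 0"
proof (rule poly_eqI)
  fix i
  show "coeff (pderiv f) i = coeff 0 i"
  proof (cases i)
    case 0 thus ?thesis using assms(2) by (simp add: coeff_pderiv)
  next
    case (Suc k)
    have "coeff (pderiv (pderiv f)) k = 0" using assms(1) by simp
    hence "coeff f (Suc (Suc k)) = 0" by (simp add: coeff_pderiv)
    thus ?thesis using Suc by (simp add: coeff_pderiv)
  qed
qed

lemma deriv_eq:
  fixes f :: "real poly"
  assumes "smult (of_nat (n+1)) (pderiv f * pderiv f) = smult (of_nat n) (f * pderiv (pderiv f))"
  shows "pderiv f = 0"
proof (rule ccontr)
  assume nz: "pderiv f \<noteq> 0"
  define e where "e = degree f"
  define L where "L = coeff f e"
  have e1: "e \<ge> 1" using nz by (simp add: pderiv_eq_0_iff e_def)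
  have fnz: "f \<noteq> 0" using nz by (metis pderiv_0)
  have L0: "L \<noteq> 0" using fnz by (simp add: L_def e_def)
  have df: "degree (pderiv f) = e - 1" using e_def degree_pderiv by simp
  have lf: "coeff (pderiv f) (e-1) = of_nat e * L" using e1 L_def by (simp add: coeff_pderiv)
  have "coeff (pderiv f * pderiv f) (degree (pderiv f) + degree (pderiv f)) = (of_nat e * L)^2"
    using coeff_mult_degree_sum[of "pderiv f" "pderiv f"] lf df by (simp add: power2_eq_square)
  hence lhs: "coeff (smult (of_nat (n+1)) (pderiv f * pderiv f)) ((e-1)+(e-1)) = of_nat (n+1) * (of_nat e * L)^2"
    using df by simp
  show False
  proof (cases "e = 1")
    case True
    have "degree (pderiv f) = 0" using df True by simp
    hence "pderiv (pderiv f) = 0" using pderiv_eq_0_iff by blast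
    hence "of_nat (n+1) * (of_nat e * L)^2 = 0" using lhs assms True by simp
    thus False using L0 True by simp
  next
    case False
    hence e2: "e \<ge> 2" using e1 by simp
    have ddf: "degree (pderiv (pderiv f)) = e - 2" using df degree_pderiv[of "pderiv f"] by simp
    have ldd: "coeff (pderiv (pderiv f)) (e-2) = of_nat (e-1) * (of_nat e * L)"
      using e2 lf by (simp add: coeff_pderiv Suc_diff_Suc numeral_2_eq_2)
    have "coeff (f * pderiv (pderiv f)) (degree f + degree (pderiv (pderiv f))) = L * (of_nat (e-1) * (of_nat e * L))"
      using coeff_mult_degree_sum[of f "pderiv (pderiv f)"] ldd ddf L_def e_def by simp
    hence rhs: "coeff (smult (of_nat n) (f * pderiv (pderiv f))) ((e-1)+(e-1)) = of_nat n * (L * (of_nat (e-1) * (of_nat e * L)))"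
    proof -
      have "(e-1)+(e-1) = degree f + degree (pderiv (pderiv f))" using ddf e2 e_def by simp
      thus ?thesis using \<open>coeff (f * pderiv (pderiv f)) (degree f + degree (pderiv (pderiv f))) = _\<close> by simp
    qed
    have eq: "real (n+1) * (real e * L)^2 = real n * (L * (real (e-1) * (real e * L)))"
      using lhs rhs assms by metis
    have "real (e-1) = real e - 1" using e2 by simp
    with eq have "(real (n+1) * real e - real n * (real e - 1)) * (real e * L * L) = 0"
      by (simp add: algebra_simps power2_eq_square)
    moreover have "real e * L * L \<noteq> 0" using L0 e2 by simp
    ultimately have "real (n+1) * real e - real n * (real e - 1) = 0" by simp
    hence "real e + real n = 0" by (simp add: algebra_simps)
    thus False using e2 by simp
  qed
qed

definition to_pp :: "bpoly \<Rightarrow> real poly poly" where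
  "to_pp c = (\<Sum>m\<in>{m. c m \<noteq> 0}. monom (monom (c m) (fst m)) (snd m))"

lemma coeff_to_pp:
  assumes "is_bpoly c"
  shows "coeff (coeff (to_pp c) j) i = c (i,j)"
proof -
  let ?S = "{m. c m \<noteq> 0}"
  have f: "finite ?S" using assms by (simp add: is_bpoly_def)
  have "coeff (coeff (to_pp c) j) i = (\<Sum>m\<in>?S. if m = (i,j) then c m else 0)"
    unfolding to_pp_def coeff_sum by (rule sum.cong) (auto simp: coeff_monom)
  also have "\<dots> = c (i,j)" using f by (simp add: sum.delta)
  finally show ?thesis .
qed

lemma poly_to_pp:
  "poly (poly (to_pp c) [:y:]) x = beval c x y"
proof -
  have "poly (poly (to_pp c) [:y:]) x = (\<Sum>m\<in>{m. c m \<noteq> 0}. poly (poly (monom (monom (c m) (fst m)) (snd m)) [:y:]) x)"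
    unfolding to_pp_def by (simp only: poly_sum)
  also have "\<dots> = beval c x y" unfolding beval_def
    by (rule sum.cong) (simp_all only: poly_monom poly_mult poly_power poly_pCons poly_0 mult_zero_right add_0_right mult_zero_left mult_ac)
  finally show ?thesis .
qed

lemma coeff_poly_const:
  "coeff (poly R [:y:]) i = poly (map_poly (\<lambda>r. coeff r i) R) (y::real)"
proof (induction R)
  case 0 then show ?case by simp
next
  case (pCons a R)
  have "poly (pCons a R) [:y:] = a + [:y:] * (poly R [:y:])" by (simp only: poly_pCons)
  also have "\<dots> = a + smult y (poly R [:y:])" by simp
  finally have "coeff (poly (pCons a R) [:y:]) i = coeff a i + y * coeff (poly R [:y:]) i" by simp
  also have "\<dots> = poly (map_poly (\<lambda>r. coeff r i) (pCons a R)) y"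
    using pCons by (simp add: map_poly_pCons)
  finally show ?case .
qed

lemma ident:
  fixes R :: "real poly poly"
  assumes "\<And>x y. poly (poly R [:y:]) x = 0"
  shows "R = 0"
proof -
  have 1: "poly R [:y:] = 0" for y using poly_all_0_iff_0[of "poly R [:y:]"] assms by simp
  have 2: "map_poly (\<lambda>r. coeff r i) R = 0" for i
  proof -
    have "poly (map_poly (\<lambda>r. coeff r i) R) y = 0" for y
      using coeff_poly_const[of R y i] 1[of y] by simp
    thus ?thesis using poly_all_0_iff_0[of "map_poly (\<lambda>r. coeff r i) R"] by simp
  qed
  show ?thesis
  proof (rule poly_eqI)
    fix j
    show "coeff R j = coeff 0 j"
    proof (rule poly_eqI)
      fix i show "coeff (coeff R j) i = coeff (coeff 0 j) i"
        using arg_cong[OF 2[of i], of "\<lambda>p. coeff p j"] by (simp add: coeff_map_poly)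
    qed
  qed
qed

lemma to_pp_bdx:
  assumes "is_bpoly c" shows "to_pp (bdx c) = map_poly pderiv (to_pp c)"
proof (rule poly_eqI, rule poly_eqI)
  fix j i
  show "coeff (coeff (to_pp (bdx c)) j) i = coeff (coeff (map_poly pderiv (to_pp c)) j) i"
    using assms by (simp add: coeff_to_pp[OF is_bpoly_bdx[OF assms]] coeff_to_pp coeff_map_poly coeff_pderiv, simp add: bdx_def)
qed

lemma to_pp_bdy:
  assumes "is_bpoly c" shows "to_pp (bdy c) = pderiv (to_pp c)"
proof (rule poly_eqI, rule poly_eqI)
  fix j i
  show "coeff (coeff (to_pp (bdy c)) j) i = coeff (coeff (pderiv (to_pp c)) j) i"
    using assms by (simp add: coeff_to_pp[OF is_bpoly_bdy[OF assms]] coeff_to_pp coeff_pderiv of_nat_poly, simp add: bdy_def)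
qed

lemma core:
  fixes P Q :: "real poly poly"
  assumes E1: "map_poly pderiv P + pderiv Q = 0"
  and E2: "map_poly pderiv P * map_poly pderiv P + pderiv P * map_poly pderiv Q = 0"
  and par: "\<And>j. coeff (coeff P j) 1 = 0"
  shows "pderiv (coeff P j0) = 0"
proof -
  define n where "n = degree P"
  have cA: "coeff (map_poly pderiv R) j = pderiv (coeff R j)" for j and R :: "real poly poly"
    by (simp add: coeff_map_poly)
  have cD: "coeff (pderiv R) j = smult (of_nat (Suc j)) (coeff R (Suc j))" for j and R :: "real poly poly"
    by (simp add: coeff_pderiv of_nat_poly)
  have rel: "smult (of_nat (Suc j)) (pderiv (coeff Q (Suc j))) = - pderiv (pderiv (coeff P j))" for j
  proof -
    have "coeff (map_poly pderiv P + pderiv Q) j = 0" using E1 by simp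
    hence "pderiv (coeff P j) + smult (of_nat (Suc j)) (coeff Q (Suc j)) = 0"
      by (simp only: coeff_add cA cD)
    hence "pderiv (pderiv (coeff P j) + smult (of_nat (Suc j)) (coeff Q (Suc j))) = 0" by simp
    hence "pderiv (pderiv (coeff P j)) + smult (of_nat (Suc j)) (pderiv (coeff Q (Suc j))) = 0"
      by (simp only: pderiv_add pderiv_smult)
    thus ?thesis by (simp add: eq_neg_iff_add_eq_0 add.commute)
  qed
  have relz: "pderiv (coeff Q (Suc j)) = 0" if "pderiv (pderiv (coeff P j)) = 0" for j
  proof -
    have "smult (of_nat (Suc j)) (pderiv (coeff Q (Suc j))) = 0" using rel[of j] that by simp
    thus ?thesis by (simp only: smult_eq_0_iff) simp
  qed
  have hi: "coeff P j = 0" if "j > n" for j using that n_def by (simp add: coeff_eq_0)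
  have cE2: "(\<Sum>i\<le>N. pderiv (coeff P i) * pderiv (coeff P (N-i)))
     + (\<Sum>i\<le>N. smult (of_nat (Suc i)) (coeff P (Suc i)) * pderiv (coeff Q (N-i))) = 0" for N
  proof -
    have "coeff (map_poly pderiv P * map_poly pderiv P + pderiv P * map_poly pderiv Q) N = 0"
      using E2 by simp
    thus ?thesis by (simp only: coeff_add coeff_mult cA cD)
  qed
  have main: "\<forall>j\<ge>k. pderiv (coeff P j) = 0" if "k \<le> n+1" for k
    using that
  proof (induction k rule: inc_induct)
    case base
    then show ?case using hi by simp
  next
    case (step k)
    have IH: "pderiv (coeff P j) = 0" if "j \<ge> Suc k" for j using step.IH that by simp
    have "pderiv (coeff P k) = 0"
    proof (cases "k = n")
      case True
      let ?f = "coeff P n"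
      have S1: "(\<Sum>i\<le>n+n. pderiv (coeff P i) * pderiv (coeff P (n+n-i))) = pderiv ?f * pderiv ?f"
      proof (rule sum_single[where a=n])
        fix i assume i: "i \<le> n+n" "i \<noteq> n"
        show "pderiv (coeff P i) * pderiv (coeff P (n+n-i)) = 0"
        proof (cases "i > n")
          case True thus ?thesis using hi by simp
        next
          case False hence "n+n-i > n" using i by simp
          thus ?thesis using hi by simp
        qed
      qed simp_all
      have S2: "(\<Sum>i\<le>n+n. smult (of_nat (Suc i)) (coeff P (Suc i)) * pderiv (coeff Q (n+n-i)))
         = smult (of_nat n) ?f * pderiv (coeff Q (Suc n))"
      proof (cases "n = 0")
        case True
        thus ?thesis using hi by simp
      next
        case False
        show ?thesis
        proof (rule sum_single[where a="n-1"])
          fix i assume i: "i \<le> n+n" "i \<noteq> n-1"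
          show "smult (of_nat (Suc i)) (coeff P (Suc i)) * pderiv (coeff Q (n+n-i)) = 0"
          proof (cases "i \<ge> n")
            case True thus ?thesis using hi by simp
          next
            case False
            hence "i < n - 1" using i by simp
            hence eq: "n+n-i = Suc (n+n-i-1)" and gt: "n+n-i-1 > n" by auto
            have "pderiv (pderiv (coeff P (n+n-i-1))) = 0" using hi[OF gt] by simp
            hence "pderiv (coeff Q (Suc (n+n-i-1))) = 0" by (rule relz)
            thus ?thesis using eq by simp
          qed
        qed (use False in \<open>simp_all add: Suc_diff_Suc\<close>)
      qed
      have E: "pderiv ?f * pderiv ?f + smult (of_nat n) ?f * pderiv (coeff Q (Suc n)) = 0"
        using cE2[of "n+n"] S1 S2 by simp
      have "smult (of_nat (n+1)) (pderiv ?f * pderiv ?f)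
          = - (smult (of_nat n) ?f * smult (of_nat (Suc n)) (pderiv (coeff Q (Suc n))))"
        using arg_cong[OF E, of "smult (of_nat (n+1))"]
        by (simp add: smult_add_right mult_smult_right mult_smult_left eq_neg_iff_add_eq_0 mult_ac)
      also have "\<dots> = smult (of_nat n) (?f * pderiv (pderiv ?f))"
        using rel[of n] by (simp add: mult_smult_left)
      finally show ?thesis using True deriv_eq by blast
    next
      case False
      hence kn: "k < n" using step.hyps by simp
      hence n0: "n \<noteq> 0" by simp
      have Pn: "coeff P n \<noteq> 0" using n0 n_def by (metis degree_0 leading_coeff_0_iff)
      have S1: "(\<Sum>i\<le>n+k. pderiv (coeff P i) * pderiv (coeff P (n+k-i))) = 0"
      proof (rule sum_zero)
        fix i assume "i \<le> n+k"
        show "pderiv (coeff P i) * pderiv (coeff P (n+k-i)) = 0"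
        proof (cases "i > k")
          case True thus ?thesis using IH by simp
        next
          case False thus ?thesis using IH[of "n+k-i"] kn by simp
        qed
      qed
      have S2: "(\<Sum>i\<le>n+k. smult (of_nat (Suc i)) (coeff P (Suc i)) * pderiv (coeff Q (n+k-i)))
         = smult (of_nat n) (coeff P n) * pderiv (coeff Q (Suc k))"
      proof (rule sum_single[where a="n-1"])
        fix i assume i: "i \<le> n+k" "i \<noteq> n-1"
        show "smult (of_nat (Suc i)) (coeff P (Suc i)) * pderiv (coeff Q (n+k-i)) = 0"
        proof (cases "i \<ge> n")
          case True thus ?thesis using hi by simp
        next
          case False
          hence "i < n - 1" using i by simp
          hence eq: "n+k-i = Suc (n+k-i-1)" and gt: "n+k-i-1 \<ge> Suc k" by auto
          have "pderiv (pderiv (coeff P (n+k-i-1))) = 0" using IH[OF gt] by simp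
          hence "pderiv (coeff Q (Suc (n+k-i-1))) = 0" by (rule relz)
          thus ?thesis using eq by simp
        qed
      qed (use n0 in \<open>simp_all add: Suc_diff_Suc\<close>)
      have "smult (of_nat n) (coeff P n) * pderiv (coeff Q (Suc k)) = 0"
        using cE2[of "n+k"] S1 S2 by simp
      hence "pderiv (coeff Q (Suc k)) = 0" using Pn n0 by simp
      hence "pderiv (pderiv (coeff P k)) = 0" using rel[of k] by simp
      thus ?thesis using dd_zero par by blast
    qed
    thus ?case using IH by (metis le_antisym not_less_eq_eq)
  qed
  show ?thesis using main[of 0] by simp
qed

definition concl :: "bpoly \<Rightarrow> bpoly \<Rightarrow> bool" where
  "concl p q \<longleftrightarrow> ((\<forall>m. p m = 0) \<and> (\<forall>i j. j \<noteq> 0 \<longrightarrow> q (i,j) = 0)) \<or>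
                  ((\<forall>m. q m = 0) \<and> (\<forall>i j. i \<noteq> 0 \<longrightarrow> p (i,j) = 0))"

lemma to_pp_zero: "to_pp c = 0 \<Longrightarrow> is_bpoly c \<Longrightarrow> c (i,j) = 0"
  using coeff_to_pp[of c j i] by simp

lemma case_i:
  assumes bp: "is_bpoly p" and bq: "is_bpoly q"
  and J: "\<And>x y. (beval (bdx p) x y + 1) * (beval (bdy q) x y + 1) - beval (bdy p) x y * beval (bdx q) x y = k"
  and op: "order_gt_1 p" and oq: "order_gt_1 q"
  and xe: "x_even p" and xo: "x_odd q"
  shows "concl p q"
proof -
  have bpx: "is_bpoly (bdx p)" and bpy: "is_bpoly (bdy p)" and bqx: "is_bpoly (bdx q)" and bqy: "is_bpoly (bdy q)"
    using bp bq by (simp_all add: is_bpoly_bdx is_bpoly_bdy)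
  have op': "p (i,j) = 0" if "i + j < 2" for i j using op that unfolding order_gt_1_def by fastforce
  have oq': "q (i,j) = 0" if "i + j < 2" for i j using oq that unfolding order_gt_1_def by fastforce
  have z1: "beval (bdx p) 0 0 = 0" using beval_00[OF bpx] op'[of 1 0] by (simp add: bdx_def)
  have z2: "beval (bdy p) 0 0 = 0" using beval_00[OF bpy] op'[of 0 1] by (simp add: bdy_def)
  have z3: "beval (bdx q) 0 0 = 0" using beval_00[OF bqx] oq'[of 1 0] by (simp add: bdx_def)
  have z4: "beval (bdy q) 0 0 = 0" using beval_00[OF bqy] oq'[of 0 1] by (simp add: bdy_def)
  have k1: "k = 1" using J[of 0 0] z1 z2 z3 z4 by simp
  have f1: "beval (bdx p) x y + beval (bdy q) x y = 0"
   and f2: "beval (bdx p) x y * beval (bdx p) x y + beval (bdy p) x y * beval (bdx q) x y = 0" for x y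
  proof -
    define a where "a = beval (bdx p) x y"
    define b where "b = beval (bdy p) x y"
    define c where "c = beval (bdx q) x y"
    define d where "d = beval (bdy q) x y"
    have h1: "(a + 1) * (d + 1) - b * c = 1" using J[of x y] k1 by (simp add: a_def b_def c_def d_def)
    have "(- a + 1) * (- d + 1) - b * c = 1"
      using J[of "-x" y] k1 beval_x_odd[OF x_even_bdx[OF xe]] beval_x_odd[OF x_odd_bdy[OF xo]]
        beval_x_even[OF x_even_bdy[OF xe]] beval_x_even[OF x_odd_bdx[OF xo]]
      by (simp add: a_def b_def c_def d_def)
    with h1 have s: "a + d = 0" by (simp add: algebra_simps)
    with h1 have "a * d = b * c" by (simp add: algebra_simps)
    hence "a * a + b * c = a * (a + d)" by (simp add: algebra_simps)
    with s have "a * a + b * c = 0" by simp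
    with s show "beval (bdx p) x y + beval (bdy q) x y = 0"
      and "beval (bdx p) x y * beval (bdx p) x y + beval (bdy p) x y * beval (bdx q) x y = 0"
      by (simp_all add: a_def b_def c_def d_def)
  qed
  define P where "P = to_pp p"
  define Q where "Q = to_pp q"
  have tA: "to_pp (bdx p) = map_poly pderiv P" and tB: "to_pp (bdy p) = pderiv P"
    and tC: "to_pp (bdx q) = map_poly pderiv Q" and tD: "to_pp (bdy q) = pderiv Q"
    using bp bq by (simp_all add: P_def Q_def to_pp_bdx to_pp_bdy)
  have E1: "map_poly pderiv P + pderiv Q = 0"
    by (rule ident) (simp add: tA[symmetric] tD[symmetric] poly_to_pp f1)
  have E2: "map_poly pderiv P * map_poly pderiv P + pderiv P * map_poly pderiv Q = 0"
    by (rule ident) (simp add: tA[symmetric] tB[symmetric] tC[symmetric] poly_to_pp f2)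
  have par: "coeff (coeff P j) 1 = 0" for j
    using xe coeff_to_pp[OF bp, of j 1] by (auto simp: P_def x_even_def)
  have A0: "map_poly pderiv P = 0"
  proof (rule poly_eqI)
    fix j show "coeff (map_poly pderiv P) j = coeff 0 j"
      using core[OF E1 E2 par] by (simp add: coeff_map_poly)
  qed
  have D0: "pderiv Q = 0" using E1 A0 by simp
  have "pderiv P * map_poly pderiv Q = 0" using E2 A0 by simp
  hence BC: "pderiv P = 0 \<or> map_poly pderiv Q = 0" by simp
  have pA: "p (Suc i, j) = 0" for i j
    using to_pp_zero[of "bdx p" i j] A0 tA bpx by (simp add: bdx_def)
  have qD: "q (i, Suc j) = 0" for i j
    using to_pp_zero[of "bdy q" i j] D0 tD bqy by (simp add: bdy_def)
  show ?thesis
    using BC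
  proof
    assume B0: "pderiv P = 0"
    have pB: "p (i, Suc j) = 0" for i j
      using to_pp_zero[of "bdy p" i j] B0 tB bpy by (simp add: bdy_def)
    have "p m = 0" for m
    proof (cases m)
      case (Pair i j)
      show ?thesis
      proof (cases i)
        case 0
        show ?thesis
        proof (cases j)
          case 0 thus ?thesis using Pair \<open>i = 0\<close> op'[of 0 0] by simp
        next
          case (Suc j') thus ?thesis using Pair \<open>i = 0\<close> pB by simp
        qed
      next
        case (Suc i') thus ?thesis using Pair pA by simp
      qed
    qed
    moreover have "\<forall>i j. j \<noteq> 0 \<longrightarrow> q (i,j) = 0" using qD by (metis not0_implies_Suc)
    ultimately show ?thesis by (simp add: concl_def)
  next
    assume C0: "map_poly pderiv Q = 0"
    have qC: "q (Suc i, j) = 0" for i j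
      using to_pp_zero[of "bdx q" i j] C0 tC bqx by (simp add: bdx_def)
    have "q m = 0" for m
    proof (cases m)
      case (Pair i j)
      show ?thesis
      proof (cases i)
        case 0
        show ?thesis
        proof (cases j)
          case 0 thus ?thesis using Pair \<open>i = 0\<close> oq'[of 0 0] by simp
        next
          case (Suc j') thus ?thesis using Pair \<open>i = 0\<close> qD by simp
        qed
      next
        case (Suc i') thus ?thesis using Pair qC by simp
      qed
    qed
    moreover have "\<forall>i j. i \<noteq> 0 \<longrightarrow> p (i,j) = 0" using pA by (metis not0_implies_Suc)
    ultimately show ?thesis by (simp add: concl_def)
  qed
qed

lemma xonly:
  assumes bc: "is_bpoly c" and z: "\<And>i j. j \<noteq> 0 \<Longrightarrow> c (i,j) = 0" and oc: "order_gt_1 c"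
  shows "\<exists>N. \<forall>x y. beval c x y = (\<Sum>i\<in>{2..N}. c (i,0) * x^i)"
proof -
  let ?S = "{m. c m \<noteq> 0}"
  have fS: "finite ?S" using bc by (simp add: is_bpoly_def)
  define N where "N = Max (fst ` ?S)"
  have bnd: "fst m \<le> N" if "m \<in> ?S" for m
    unfolding N_def using fS that by (intro Max_ge) auto
  let ?T = "(\<lambda>i. (i, 0::nat)) ` {2..N}"
  have sub: "?S \<subseteq> ?T"
  proof
    fix m assume m: "m \<in> ?S"
    obtain i j where mij: "m = (i,j)" by (cases m)
    have "c (i,j) \<noteq> 0" using m mij by simp
    hence "j = 0" and "2 \<le> i + j" using z oc unfolding order_gt_1_def by auto
    moreover have "i \<le> N" using bnd[OF m] mij by simp
    ultimately show "m \<in> ?T" using mij by auto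
  qed
  have "beval c x y = (\<Sum>i\<in>{2..N}. c (i,0) * x^i)" for x y
  proof -
    have "beval c x y = (\<Sum>m\<in>?T. c m * x ^ fst m * y ^ snd m)"
      by (rule beval_superset) (use sub in auto)
    also have "\<dots> = (\<Sum>i\<in>{2..N}. c (i,0) * x^i)"
      by (subst sum.reindex) (auto simp: inj_on_def)
    finally show ?thesis .
  qed
  thus ?thesis by blast
qed

lemma ord_z: "order_gt_1 p \<Longrightarrow> i + j < 2 \<Longrightarrow> p (i,j) = 0"
  unfolding order_gt_1_def by (meson not_le)
lemma nonlin_plus_x: "order_gt_1 p \<Longrightarrow> nonlin (plus_x p) = p"
  by (auto simp: fun_eq_iff nonlin_def plus_x_def ord_z)
lemma nonlin_plus_y: "order_gt_1 p \<Longrightarrow> nonlin (plus_y p) = p"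
  by (auto simp: fun_eq_iff nonlin_def plus_y_def ord_z)
lemma order_swp: "order_gt_1 p \<Longrightarrow> order_gt_1 (swp p)"
  unfolding order_gt_1_def swp_def by (simp, metis add.commute)

lemma concl_shear:
  assumes bp: "is_bpoly p" and bq: "is_bpoly q" and op: "order_gt_1 p" and oq: "order_gt_1 q"
    and c: "concl p q"
  shows "shear_map (plus_x p) (plus_y q)"
  using c unfolding concl_def
proof
  assume h: "(\<forall>m. p m = 0) \<and> (\<forall>i j. j \<noteq> 0 \<longrightarrow> q (i,j) = 0)"
  then obtain N where N: "\<forall>x y. beval q x y = (\<Sum>i\<in>{2..N}. q (i,0) * x^i)"
    using xonly[OF bq _ oq] by blast
  have p0: "p = (\<lambda>m. 0)" using h by auto
  show ?thesis unfolding shear_map_def nonlin_plus_x[OF op] nonlin_plus_y[OF oq]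
    apply (rule exI[of _ 1], rule exI[of _ 0])
    apply simp
    apply (rule exI[of _ N], rule exI[of _ "\<lambda>i. 0"], rule exI[of _ "\<lambda>i. q (i,0)"])
    using N by (simp add: p0 beval_zero)
next
  assume h: "(\<forall>m. q m = 0) \<and> (\<forall>i j. i \<noteq> 0 \<longrightarrow> p (i,j) = 0)"
  have "\<exists>N. \<forall>x y. beval (swp p) x y = (\<Sum>i\<in>{2..N}. swp p (i,0) * x^i)"
  proof (rule xonly)
    show "is_bpoly (swp p)" using bp by (simp add: is_bpoly_swp)
    show "order_gt_1 (swp p)" using op by (simp add: order_swp)
    show "\<And>i j. j \<noteq> 0 \<Longrightarrow> swp p (i, j) = 0" using h by (simp add: swp_def)
  qed
  then obtain N where N0: "\<forall>x y. beval (swp p) x y = (\<Sum>i\<in>{2..N}. swp p (i,0) * x^i)"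
    by blast
  have N: "\<forall>x y. beval p x y = (\<Sum>i\<in>{2..N}. p (0,i) * y^i)"
  proof (intro allI)
    fix x y show "beval p x y = (\<Sum>i\<in>{2..N}. p (0,i) * y^i)"
      using N0[rule_format, of y x] unfolding beval_swp by (simp add: swp_def)
  qed
  have q0: "q = (\<lambda>m. 0)" using h by auto
  show ?thesis unfolding shear_map_def nonlin_plus_x[OF op] nonlin_plus_y[OF oq]
    apply (rule exI[of _ 0], rule exI[of _ 1])
    apply simp
    apply (rule exI[of _ N], rule exI[of _ "\<lambda>i. p (0,i)"], rule exI[of _ "\<lambda>i. 0"])
    using N by (simp add: q0 beval_zero)
qed

theorem corollary2:
  fixes p q :: bpoly
  assumes "is_bpoly p" and "is_bpoly q"
    and "jacobian_map (plus_x p) (plus_y q)"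
    and "order_gt_1 p" and "order_gt_1 q"
    and "(x_even p \<and> x_odd q) \<or> (y_odd p \<and> y_even q)"
  shows "shear_map (plus_x p) (plus_y q)"
proof -
  note bp = assms(1) and bq = assms(2) and op = assms(4) and oq = assms(5)
  obtain k where J0: "\<And>x y. beval (bdx (plus_x p)) x y * beval (bdy (plus_y q)) x y
                          - beval (bdy (plus_x p)) x y * beval (bdx (plus_y q)) x y = k"
    using assms(3) unfolding jacobian_map_def by blast
  have J: "(beval (bdx p) x y + 1) * (beval (bdy q) x y + 1) - beval (bdy p) x y * beval (bdx q) x y = k" for x y
    using J0[of x y] bp bq by (simp add: beval_bdx_plus_x beval_bdy_plus_y bdy_plus_x bdx_plus_y)
  have "concl p q"
    using assms(6)
  proof
    assume "x_even p \<and> x_odd q"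
    thus ?thesis using case_i[OF bp bq J op oq] by blast
  next
    assume h: "y_odd p \<and> y_even q"
    have J': "(beval (bdx (swp q)) x y + 1) * (beval (bdy (swp p)) x y + 1)
        - beval (bdy (swp q)) x y * beval (bdx (swp p)) x y = k" for x y
      using J[of y x] by (simp add: bdx_swp bdy_swp beval_swp algebra_simps)
    have "concl (swp q) (swp p)"
    proof (rule case_i[OF _ _ J'])
      show "is_bpoly (swp q)" "is_bpoly (swp p)" using bp bq by (simp_all add: is_bpoly_swp)
      show "order_gt_1 (swp q)" "order_gt_1 (swp p)" using op oq
        by (simp_all add: order_swp)
      show "x_even (swp q)" "x_odd (swp p)" using h
        by (auto simp: x_even_def x_odd_def y_even_def y_odd_def swp_def)
    qed
    thus ?thesis unfolding concl_def swp_def by auto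
  qed
  thus ?thesis using concl_shear bp bq op oq by blast
qed

end
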